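(* Fix positive integers $K$, $N$, $L$, a number $P_e\in[0,1]$ and a vector $\mathbf{a}\in\mathbb{C}^{KL}$. In the model described in the context, let $\delta\mathbf{a}_f=-\frac{1}{M}\hat{\mathbf{S}}^T\delta\mathbf{S}\,\mathbf{a}$. Then $E\{\delta\mathbf{a}_f\}\rightarrow 2P_e\mathbf{a}$ almost surely as $M\rightarrow\infty$.
   Context: Synchronous DS-CDMA model with $K$ users, spreading gain $N$, $L$ paths per user and $M$ symbol periods. The channel gains $\mathbf{a}=(a_{11},a_{12},\dots,a_{1L},a_{21},\dots,a_{KL})^T\in\mathbb{C}^{KL}$ are fixed (deterministic). For each user $k$, path $l$ and symbol period $t\in\{1,\dots,M\}$, the spreading code $\mathbf{s}_{kl}(t)\in\mathbb{R}^N$ has entries in $\{\pm1/\sqrt{N}\}$, which are i.i.d. uniform, and the codes are mutually independent across $(k,l,t)$. The transmitted symbols $b_k(t)\in\{\pm1\}$ are i.i.d. uniform; the fed-back decisions satisfy $\hat b_k(t)=b_k(t)$ with probability $1-P_e$ and $\hat b_k(t)=-b_k(t)$ with probability $P_e$, independently across $(k,t)$. Let $\mathbf{S}(m)=(\mathbf{s}_{11}(m),\dots,\mathbf{s}_{KL}(m))\in\mathbb{R}^{N\times KL}$, $\mathbf{B}(m)=\mathrm{diag}(b_1(m)\mathbf{I}_L,\dots,b_K(m)\mathbf{I}_L)$, $\hat{\mathbf{B}}(m)=\mathrm{diag}(\hat b_1(m)\mathbf{I}_L,\dots,\hat b_K(m)\mathbf{I}_L)$; let $\mathbf{S}$ (resp.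 $\hat{\mathbf{S}}$) be the $NM\times KL$ matrix obtained by stacking $\mathbf{S}(1)\mathbf{B}(1),\dots,\mathbf{S}(M)\mathbf{B}(M)$ (resp. $\mathbf{S}(1)\hat{\mathbf{B}}(1),\dots,\mathbf{S}(M)\hat{\mathbf{B}}(M)$) vertically, and $\delta\mathbf{S}=\mathbf{S}-\hat{\mathbf{S}}$. The expectation $E\{\cdot\}$ is taken over the symbols and decisions, conditionally on the spreading codes; "almost surely" refers to the randomness of the spreading codes. *)

theory Defs
  imports "HOL-Probability.Probability"
begin

text \<open>Indices are 0-based: users k < K, paths l < L, symbol periods t < M, chips i < N.
  A realisation of all spreading codes is a function
  s :: nat \<times> nat \<times> nat \<times> nat \<Rightarrow> real, where s (k,l,t,i) is the i-th entry of s_kl(t).\<close>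

definition code_space :: "nat \<Rightarrow> (nat \<times> nat \<times> nat \<times> nat \<Rightarrow> real) measure" where
  "code_space N = PiM UNIV (\<lambda>_. measure_pmf (pmf_of_set {- 1 / sqrt (real N), 1 / sqrt (real N)}))"

definition sym_dec_pmf :: "real \<Rightarrow> (real \<times> real) pmf" where
  "sym_dec_pmf Pe = do {
      b \<leftarrow> pmf_of_set {- 1, 1 :: real};
      err \<leftarrow> bernoulli_pmf Pe;
      return_pmf (b, if err then - b else b) }"

text \<open>Joint law of all symbols and decisions over users k < K and periods t < M,
  independent across (k,t). bb (k,t) = (b_k(t), hat b_k(t)).\<close>
definition sym_space :: "nat \<Rightarrow> nat \<Rightarrow> real \<Rightarrow> (nat \<times> nat \<Rightarrow> real \<times> real) pmf" where
  "sym_space K M Pe = Pi_pmf {(k, t). k < K \<and> t < M} (1, 1) (\<lambda>_. sym_dec_pmf Pe)"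

text \<open>Entries of the stacked matrices S, hat S (row (t,i), column (k,l)).\<close>
definition S_stk :: "(nat \<times> nat \<times> nat \<times> nat \<Rightarrow> real) \<Rightarrow> (nat \<times> nat \<Rightarrow> real \<times> real)
    \<Rightarrow> nat \<times> nat \<Rightarrow> nat \<times> nat \<Rightarrow> real" where
  "S_stk s bb = (\<lambda>(t, i) (k, l). s (k, l, t, i) * fst (bb (k, t)))"

definition Shat_stk :: "(nat \<times> nat \<times> nat \<times> nat \<Rightarrow> real) \<Rightarrow> (nat \<times> nat \<Rightarrow> real \<times> real)
    \<Rightarrow> nat \<times> nat \<Rightarrow> nat \<times> nat \<Rightarrow> real" where
  "Shat_stk s bb = (\<lambda>(t, i) (k, l). s (k, l, t, i) * snd (bb (k, t)))"

definition delta_af :: "nat \<Rightarrow> nat \<Rightarrow> nat \<Rightarrow> nat \<Rightarrow> (nat \<times> nat \<times> nat \<times> nat \<Rightarrow> real)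
    \<Rightarrow> (nat \<times> nat \<Rightarrow> real \<times> real) \<Rightarrow> (nat \<Rightarrow> nat \<Rightarrow> complex) \<Rightarrow> nat \<Rightarrow> nat \<Rightarrow> complex" where
  "delta_af K N L M s bb a k l =
     - (1 / of_nat M) *
       (\<Sum>r \<in> {..<M} \<times> {..<N}. \<Sum>c \<in> {..<K} \<times> {..<L}.
          of_real (Shat_stk s bb r (k, l) * (S_stk s bb r c - Shat_stk s bb r c)) * a (fst c) (snd c))"

end

theory Submission
  imports Defs
begin


lemma pmf_sym_dec:
  assumes "0 \<le> Pe" "Pe \<le> 1"
  shows "pmf (sym_dec_pmf Pe) (x, y) =
    (if x \<in> {-1,1} then (if y = x then (1 - Pe)/2 else if y = -x then Pe/2 else 0) else 0)"
  using assms unfolding sym_dec_pmf_def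
  by (auto simp: pmf_bind integral_pmf_of_set pmf_return indicator_def)

lemma set_sym_dec: "set_pmf (sym_dec_pmf Pe) \<subseteq> {-1,1} \<times> {-1,1}"
  unfolding sym_dec_pmf_def by (auto split: if_splits)

lemma exp_sym_dec:
  assumes "0 \<le> Pe" "Pe \<le> 1"
  shows "measure_pmf.expectation (sym_dec_pmf Pe) f =
     ((1-Pe)/2) * f (1,1) + (Pe/2) * f (1,-1) + ((1-Pe)/2) * f (-1,-1) + (Pe/2) * f (-1,1)"
proof -
  have "measure_pmf.expectation (sym_dec_pmf Pe) f = (\<Sum>z\<in>{-1,1::real} \<times> {-1,1::real}. f z * pmf (sym_dec_pmf Pe) z)"
    by (rule integral_measure_pmf_real) (use set_sym_dec in auto)
  also have "\<dots> = ((1-Pe)/2) * f (1,1) + (Pe/2) * f (1,-1) + ((1-Pe)/2) * f (-1,-1) + (Pe/2) * f (-1,1)"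
    using assms by (simp add: pmf_sym_dec Times_insert_left Times_insert_right algebra_simps) 
  finally show ?thesis .
qed



lemma (in prob_space) indep_var_pair:
  assumes ind: "indep_vars M' X I" and "j1 \<in> I" "j2 \<in> I" "j1 \<noteq> j2"
  shows "indep_var (M' j1) (X j1) (M' j2) (X j2)"
proof -
  have "indep_var (PiM {j1} M') (\<lambda>\<omega>. restrict (\<lambda>i. X i \<omega>) {j1}) (PiM {j2} M') (\<lambda>\<omega>. restrict (\<lambda>i. X i \<omega>) {j2})"
    by (rule indep_var_restrict[OF ind]) (use assms in auto)
  then have "indep_var (M' j1) ((\<lambda>f. f j1) \<circ> (\<lambda>\<omega>. restrict (\<lambda>i. X i \<omega>) {j1})) (M' j2) ((\<lambda>f. f j2) \<circ> (\<lambda>\<omega>. restrict (\<lambda>i. X i \<omega>) {j2}))"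
    by (rule indep_var_compose) (auto intro!: measurable_component_singleton)
  also have "((\<lambda>f. f j1) \<circ> (\<lambda>\<omega>. restrict (\<lambda>i. X i \<omega>) {j1})) = X j1" by (auto simp: fun_eq_iff)
  also have "((\<lambda>f. f j2) \<circ> (\<lambda>\<omega>. restrict (\<lambda>i. X i \<omega>) {j2})) = X j2" by (auto simp: fun_eq_iff)
  finally show ?thesis .
qed

lemma finite_set_sym_space: "finite (set_pmf (sym_space K M Pe))"
proof -
  have fin: "finite {(k, t). k < K \<and> t < M}"
    by (rule finite_subset[of _ "{..<K} \<times> {..<M}"]) auto
  have "finite (set_pmf (sym_dec_pmf Pe))"
    by (rule finite_subset[OF set_sym_dec]) auto
  then show ?thesis unfolding sym_space_def using fin
    by (subst set_Pi_pmf) (auto intro!: finite_PiE_dflt)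
qed

lemma exp_sym_comp:
  fixes g :: "real \<times> real \<Rightarrow> real"
  assumes "0 \<le> Pe" "Pe \<le> 1" "k < K" "t < M"
  shows "measure_pmf.expectation (sym_space K M Pe) (\<lambda>bb. g (bb (k, t))) =
         measure_pmf.expectation (sym_dec_pmf Pe) g"
proof -
  have fin: "finite {(k, t). k < K \<and> t < M}"
    by (rule finite_subset[of _ "{..<K} \<times> {..<M}"]) auto
  have "measure_pmf.expectation (sym_space K M Pe) (\<lambda>bb. g (bb (k, t))) =
        measure_pmf.expectation (map_pmf (\<lambda>f. f (k,t)) (sym_space K M Pe)) g"
    by simp
  also have "map_pmf (\<lambda>f. f (k,t)) (sym_space K M Pe) = sym_dec_pmf Pe"
    unfolding sym_space_def using assms fin by (subst Pi_pmf_component) auto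
  finally show ?thesis .
qed

lemma exp_sym_main:
  assumes "0 \<le> Pe" "Pe \<le> 1" "k < K" "k' < K" "t < M"
  shows "measure_pmf.expectation (sym_space K M Pe)
           (\<lambda>bb. snd (bb (k, t)) * (fst (bb (k', t)) - snd (bb (k', t)))) =
         (if k' = k then - 2 * Pe else 0)"
proof (cases "k' = k")
  case True
  then show ?thesis
    using exp_sym_comp[OF assms(1,2,3,5), of "\<lambda>p. snd p * (fst p - snd p)"] exp_sym_dec[OF assms(1,2)]
    by (simp add: algebra_simps)
next
  case False
  have fin: "finite {(k, t). k < K \<and> t < M}"
    by (rule finite_subset[of _ "{..<K} \<times> {..<M}"]) auto
  have ind: "prob_space.indep_vars (measure_pmf (sym_space K M Pe)) (\<lambda>_. count_space UNIV) (\<lambda>x f. f x) {(k, t). k < K \<and> t < M}"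
    unfolding sym_space_def by (rule indep_vars_Pi_pmf[OF fin])
  have "prob_space.indep_var (measure_pmf (sym_space K M Pe)) (count_space UNIV) (\<lambda>f. f (k,t)) (count_space UNIV) (\<lambda>f. f (k',t))"
    using prob_space.indep_var_pair[OF measure_pmf.prob_space_axioms ind, of "(k,t)" "(k',t)"] assms False by auto
  then have "prob_space.indep_var (measure_pmf (sym_space K M Pe)) borel ((\<lambda>p. snd p) \<circ> (\<lambda>f. f (k,t))) borel ((\<lambda>p. fst p - snd p) \<circ> (\<lambda>f. f (k',t)))"
    by (rule prob_space.indep_var_compose[OF measure_pmf.prob_space_axioms]) auto
  then have iv: "prob_space.indep_var (measure_pmf (sym_space K M Pe)) borel (\<lambda>bb. snd (bb (k,t))) borel (\<lambda>bb. fst (bb (k',t)) - snd (bb (k',t)))"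
    by (simp add: comp_def)
  have "measure_pmf.expectation (sym_space K M Pe)
           (\<lambda>bb. snd (bb (k, t)) * (fst (bb (k', t)) - snd (bb (k', t)))) =
        measure_pmf.expectation (sym_space K M Pe) (\<lambda>bb. snd (bb (k, t))) *
        measure_pmf.expectation (sym_space K M Pe) (\<lambda>bb. fst (bb (k', t)) - snd (bb (k', t)))"
    by (rule prob_space.indep_var_lebesgue_integral[OF measure_pmf.prob_space_axioms iv]) (auto intro!: integrable_measure_pmf_finite finite_set_sym_space)
  also have "measure_pmf.expectation (sym_space K M Pe) (\<lambda>bb. snd (bb (k, t))) = 0"
    using exp_sym_comp[OF assms(1,2,3,5), of snd] exp_sym_dec[OF assms(1,2)] by simp
  finally show ?thesis using False by simp
qed



definition Cs :: "(nat \<times> nat \<times> nat \<times> nat \<Rightarrow> real) \<Rightarrow> nat \<Rightarrow> nat \<Rightarrow> nat \<Rightarrow> nat \<Rightarrow> nat \<Rightarrow> real" where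
  "Cs s N k l l' M = (\<Sum>r\<in>{..<M} \<times> {..<N}. s (k, l, fst r, snd r) * s (k, l', fst r, snd r))"

lemma sum_algebra:
  assumes "k < K"
  shows "- (1 / of_nat M) * (\<Sum>r\<in>{..<M} \<times> {..<N}. \<Sum>c\<in>{..<K} \<times> {..<L}.
      complex_of_real (s (k, l, fst r, snd r) * s (fst c, snd c, fst r, snd r) * (if fst c = k then - 2 * Pe else 0)) * a (fst c) (snd c))
    = (\<Sum>l'<L. complex_of_real (2 * Pe * Cs s N k l l' M / real M) * a k l')"
proof -
  have inner: "(\<Sum>c\<in>{..<K} \<times> {..<L}.
      complex_of_real (s (k, l, fst r, snd r) * s (fst c, snd c, fst r, snd r) * (if fst c = k then - 2 * Pe else 0)) * a (fst c) (snd c))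
     = (\<Sum>l'<L. complex_of_real (s (k, l, fst r, snd r) * s (k, l', fst r, snd r) * (- 2 * Pe)) * a k l')" for r
  proof -
    have "(\<Sum>c\<in>{..<K} \<times> {..<L}.
      complex_of_real (s (k, l, fst r, snd r) * s (fst c, snd c, fst r, snd r) * (if fst c = k then - 2 * Pe else 0)) * a (fst c) (snd c))
      = (\<Sum>k'<K. \<Sum>l'<L. complex_of_real (s (k, l, fst r, snd r) * s (k', l', fst r, snd r) * (if k' = k then - 2 * Pe else 0)) * a k' l')"
      by (subst sum.cartesian_product) (simp add: case_prod_beta)
    also have "\<dots> = (\<Sum>k'<K. if k' = k then (\<Sum>l'<L. complex_of_real (s (k, l, fst r, snd r) * s (k', l', fst r, snd r) * (- 2 * Pe)) * a k' l') else 0)"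
      by (intro sum.cong) auto
    also have "\<dots> = (\<Sum>l'<L. complex_of_real (s (k, l, fst r, snd r) * s (k, l', fst r, snd r) * (- 2 * Pe)) * a k l')"
      using assms by (simp add: sum.delta)
    finally show ?thesis .
  qed
  have "- (1 / of_nat M) * (\<Sum>r\<in>{..<M} \<times> {..<N}. \<Sum>c\<in>{..<K} \<times> {..<L}.
      complex_of_real (s (k, l, fst r, snd r) * s (fst c, snd c, fst r, snd r) * (if fst c = k then - 2 * Pe else 0)) * a (fst c) (snd c))
     = - (1 / of_nat M) * (\<Sum>r\<in>{..<M} \<times> {..<N}. \<Sum>l'<L. complex_of_real (s (k, l, fst r, snd r) * s (k, l', fst r, snd r) * (- 2 * Pe)) * a k l')"
    by (simp only: inner)
  also have "\<dots> = - (1 / of_nat M) * (\<Sum>l'<L. \<Sum>r\<in>{..<M} \<times> {..<N}. complex_of_real (s (k, l, fst r, snd r) * s (k, l', fst r, snd r) * (- 2 * Pe)) * a k l')"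
    by (subst sum.swap) simp
  also have "\<dots> = (\<Sum>l'<L. complex_of_real (2 * Pe * Cs s N k l l' M / real M) * a k l')"
  proof -
    have eq: "- (1 / of_nat M) * (\<Sum>r\<in>{..<M} \<times> {..<N}. complex_of_real (s (k, l, fst r, snd r) * s (k, l', fst r, snd r) * (- 2 * Pe)) * a k l') =
      complex_of_real (2 * Pe * Cs s N k l l' M / real M) * a k l'" for l'
    proof -
      let ?X = "\<lambda>r. s (k, l, fst r, snd r) * s (k, l', fst r, snd r)"
      have "(\<Sum>r\<in>{..<M} \<times> {..<N}. complex_of_real (?X r * (- 2 * Pe)) * a k l') =
            complex_of_real ((\<Sum>r\<in>{..<M} \<times> {..<N}. ?X r) * (- 2 * Pe)) * a k l'"
        by (simp add: sum_distrib_right sum_negf)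
      then show ?thesis unfolding Cs_def by simp
    qed
    show ?thesis by (subst sum_distrib_left) (simp only: eq)
  qed
  finally show ?thesis .
qed



lemma exp_delta:
  assumes "0 \<le> Pe" "Pe \<le> 1" "k < K"
  shows "measure_pmf.expectation (sym_space K M Pe) (\<lambda>bb. delta_af K N L M s bb a k l)
       = (\<Sum>l'<L. complex_of_real (2 * Pe * Cs s N k l l' M / real M) * a k l')"
proof -
  let ?P = "measure_pmf (sym_space K M Pe)"
  have int: "integrable ?P f" for f :: "_ \<Rightarrow> 'b::{banach, second_countable_topology}"
    by (rule integrable_measure_pmf_finite[OF finite_set_sym_space])
  have F: "integral\<^sup>L ?P (\<lambda>bb. Shat_stk s bb r (k, l) * (S_stk s bb r c - Shat_stk s bb r c))
      = s (k, l, fst r, snd r) * s (fst c, snd c, fst r, snd r) * (if fst c = k then - 2 * Pe else 0)"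
    if r: "r \<in> {..<M} \<times> {..<N}" and c: "c \<in> {..<K} \<times> {..<L}" for r c
  proof -
    obtain t i where ti: "r = (t, i)" by (cases r)
    obtain k' l' where kl: "c = (k', l')" by (cases c)
    have "(\<lambda>bb. Shat_stk s bb r (k, l) * (S_stk s bb r c - Shat_stk s bb r c)) =
          (\<lambda>bb. (s (k, l, t, i) * s (k', l', t, i)) * (snd (bb (k, t)) * (fst (bb (k', t)) - snd (bb (k', t)))))"
      by (auto simp: ti kl S_stk_def Shat_stk_def fun_eq_iff algebra_simps)
    then have "integral\<^sup>L ?P (\<lambda>bb. Shat_stk s bb r (k, l) * (S_stk s bb r c - Shat_stk s bb r c))
        = (s (k, l, t, i) * s (k', l', t, i)) * integral\<^sup>L ?P (\<lambda>bb. snd (bb (k, t)) * (fst (bb (k', t)) - snd (bb (k', t))))"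
      by simp
    also have "\<dots> = (s (k, l, t, i) * s (k', l', t, i)) * (if k' = k then - 2 * Pe else 0)"
      using exp_sym_main[OF assms(1,2,3), of k' t] r c ti kl by auto
    finally show ?thesis by (simp add: ti kl)
  qed
  have hlp: "integral\<^sup>L ?P (\<lambda>bb. complex_of_real (G bb) * z) = complex_of_real (integral\<^sup>L ?P G) * z" for G z
    by (simp only: integral_mult_left_zero integral_complex_of_real)
  have "measure_pmf.expectation (sym_space K M Pe) (\<lambda>bb. delta_af K N L M s bb a k l)
      = - (1 / of_nat M) * (\<Sum>r\<in>{..<M} \<times> {..<N}. \<Sum>c\<in>{..<K} \<times> {..<L}.
          integral\<^sup>L ?P (\<lambda>bb. of_real (Shat_stk s bb r (k, l) * (S_stk s bb r c - Shat_stk s bb r c)) * a (fst c) (snd c)))"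
    unfolding delta_af_def
    by (simp add: integral_sum int)
  also have "\<dots> = - (1 / of_nat M) * (\<Sum>r\<in>{..<M} \<times> {..<N}. \<Sum>c\<in>{..<K} \<times> {..<L}.
      complex_of_real (s (k, l, fst r, snd r) * s (fst c, snd c, fst r, snd r) * (if fst c = k then - 2 * Pe else 0)) * a (fst c) (snd c))"
    by (intro arg_cong2[where f="(*)"] refl sum.cong) (simp only: hlp F)
  also have "\<dots> = (\<Sum>l'<L. complex_of_real (2 * Pe * Cs s N k l l' M / real M) * a k l')"
    by (rule sum_algebra[OF assms(3)])
  finally show ?thesis .
qed



abbreviation M0 :: "nat \<Rightarrow> real measure" where
  "M0 N \<equiv> measure_pmf (pmf_of_set {- 1 / sqrt (real N), 1 / sqrt (real N)})"

lemma cs_eq: "code_space N = PiM UNIV (\<lambda>_. M0 N)"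
  unfolding code_space_def by simp

lemma cs_prob: "prob_space (code_space N)"
  unfolding code_space_def by (rule prob_space_PiM) (rule measure_pmf.prob_space_axioms)

lemma cs_pps: "product_prob_space (\<lambda>_::nat \<times> nat \<times> nat \<times> nat. M0 N)"
  by (rule product_prob_spaceI) (rule measure_pmf.prob_space_axioms)

lemma cs_component: "distr (code_space N) (M0 N) (\<lambda>x. x j) = M0 N"
  unfolding cs_eq by (rule product_prob_space.PiM_component[OF cs_pps]) simp

lemma cs_indep: "prob_space.indep_vars (code_space N) (\<lambda>_. M0 N) (\<lambda>j x. x j) UNIV"
proof -
  interpret prob_space "code_space N" by (rule cs_prob)
  have rv: "random_variable (M0 N) (\<lambda>x. x j)" for j
    unfolding cs_eq by (rule measurable_component_singleton) simp
  show ?thesis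
  proof (subst indep_vars_iff_distr_eq_PiM[OF _ rv])
    have "(\<lambda>x. \<lambda>i\<in>UNIV. x i) = (\<lambda>x::nat \<times> nat \<times> nat \<times> nat \<Rightarrow> real. x)" by (auto simp: fun_eq_iff)
    then have "distr (code_space N) (Pi\<^sub>M UNIV (\<lambda>_. M0 N)) (\<lambda>x. \<lambda>i\<in>UNIV. x i) = code_space N"
      by (simp add: cs_eq)
    also have "\<dots> = Pi\<^sub>M UNIV (\<lambda>i. distr (code_space N) (M0 N) (\<lambda>x. x i))"
      unfolding cs_component by (rule cs_eq)
    finally show "distr (code_space N) (Pi\<^sub>M UNIV (\<lambda>_. M0 N)) (\<lambda>x. \<lambda>i\<in>UNIV. x i) =
        Pi\<^sub>M UNIV (\<lambda>i. distr (code_space N) (M0 N) (\<lambda>x. x i))" .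
  qed simp
qed

lemma cs_AE_support: "AE s in code_space N. \<forall>j. s j \<in> {- 1 / sqrt (real N), 1 / sqrt (real N)}"
proof (subst AE_all_countable, intro allI)
  fix j
  have "AE x in M0 N. x \<in> {- 1 / sqrt (real N), 1 / sqrt (real N)}"
    by (rule AE_pmfI) simp
  then show "AE s in code_space N. s j \<in> {- 1 / sqrt (real N), 1 / sqrt (real N)}"
    unfolding cs_eq by (rule product_prob_space.AE_component[OF cs_pps, OF UNIV_I])
qed

lemma cs_integral_coord:
  assumes "0 < N"
  shows "integrable (code_space N) (\<lambda>x. x j)" "integral\<^sup>L (code_space N) (\<lambda>x. x j) = 0"
proof -
  have m: "(\<lambda>x. x j) \<in> measurable (code_space N) (M0 N)"
    unfolding cs_eq by (rule measurable_component_singleton) simp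
  have fin: "finite (set_pmf (pmf_of_set {- 1 / sqrt (real N), 1 / sqrt (real N)}))" by simp
  have "integrable (distr (code_space N) (M0 N) (\<lambda>x. x j)) (\<lambda>y. y)"
    unfolding cs_component by (rule integrable_measure_pmf_finite[OF fin])
  then show "integrable (code_space N) (\<lambda>x. x j)"
    by (subst (asm) integrable_distr_eq[OF m]) auto
  have "integral\<^sup>L (code_space N) (\<lambda>x. x j) = integral\<^sup>L (distr (code_space N) (M0 N) (\<lambda>x. x j)) (\<lambda>y. y)"
    by (rule integral_distr[symmetric, OF m]) simp
  also have "\<dots> = 0"
    unfolding cs_component using assms by (simp add: integral_pmf_of_set)
  finally show "integral\<^sup>L (code_space N) (\<lambda>x. x j) = 0" .
qed



lemma cs_meas_coord [measurable]: "(\<lambda>s. s j) \<in> borel_measurable (code_space N)"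
proof -
  have "(\<lambda>s. s j) \<in> measurable (code_space N) (M0 N)"
    unfolding cs_eq by (rule measurable_component_singleton) simp
  moreover have "(\<lambda>x. x) \<in> measurable (M0 N) borel" by simp
  ultimately show ?thesis using measurable_compose by blast
qed

lemma hoeff_step:
  assumes N: "0 < N" and ll: "l \<noteq> l'" and eps: "0 \<le> \<epsilon>" and n: "0 < n"
  shows "measure (code_space N) {s \<in> space (code_space N).
           \<bar>(\<Sum>r\<in>{..<n} \<times> {..<N}. s (k, l, fst r, snd r) * s (k, l', fst r, snd r))\<bar> \<ge> \<epsilon>}
         \<le> 2 * exp (- 2 * \<epsilon>\<^sup>2 / (\<Sum>r\<in>{..<n} \<times> {..<N}. (1 / real N - - (1 / real N))\<^sup>2))"
proof -
  define I where "I = {..<n} \<times> {..<N}"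
  define X where "X = (\<lambda>r (s::nat \<times> nat \<times> nat \<times> nat \<Rightarrow> real). s (k, l, fst r, snd r) * s (k, l', fst r, snd r))"
  define K where "K = (\<lambda>r::nat \<times> nat. {(k, l, fst r, snd r), (k, l', fst r, snd r)})"
  interpret P: prob_space "code_space N" by (rule cs_prob)
  have ind0: "P.indep_vars (\<lambda>_. M0 N) (\<lambda>j x. x j) UNIV" by (rule cs_indep)
  have "P.indep_vars (\<lambda>r. PiM (K r) (\<lambda>_. M0 N)) (\<lambda>r \<omega>. restrict (\<lambda>i. \<omega> i) (K r)) I"
    by (rule P.indep_vars_restrict[OF ind0]) (auto simp: K_def disjoint_family_on_def ll)
  then have "P.indep_vars (\<lambda>_. borel) (\<lambda>r \<omega>. (\<lambda>f. f (k, l, fst r, snd r) * f (k, l', fst r, snd r)) (restrict (\<lambda>i. \<omega> i) (K r))) I"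
  proof (rule P.indep_vars_compose2)
    fix r assume "r \<in> I"
    have c1: "(\<lambda>f. f (k, l, fst r, snd r)) \<in> measurable (PiM (K r) (\<lambda>_. M0 N)) (M0 N)"
      by (rule measurable_component_singleton) (simp add: K_def)
    have c2: "(\<lambda>f. f (k, l', fst r, snd r)) \<in> measurable (PiM (K r) (\<lambda>_. M0 N)) (M0 N)"
      by (rule measurable_component_singleton) (simp add: K_def)
    have i: "(\<lambda>x. x) \<in> measurable (M0 N) borel" by simp
    show "(\<lambda>f. f (k, l, fst r, snd r) * f (k, l', fst r, snd r)) \<in> borel_measurable (PiM (K r) (\<lambda>_. M0 N))"
      by (intro borel_measurable_times measurable_compose[OF c1 i] measurable_compose[OF c2 i])
  qed
  also have "?this \<longleftrightarrow> P.indep_vars (\<lambda>_. borel) X I"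
    by (intro P.indep_vars_cong) (auto simp: X_def K_def)
  finally have indX: "P.indep_vars (\<lambda>_. borel) X I" .
  have expX: "P.expectation (X r) = 0" if "r \<in> I" for r
  proof -
    have "P.indep_var (M0 N) (\<lambda>x. x (k, l, fst r, snd r)) (M0 N) (\<lambda>x. x (k, l', fst r, snd r))"
      using P.indep_var_pair[OF ind0, of "(k, l, fst r, snd r)" "(k, l', fst r, snd r)"] ll by auto
    then have "P.indep_var borel ((\<lambda>x. x) \<circ> (\<lambda>x. x (k, l, fst r, snd r))) borel ((\<lambda>x. x) \<circ> (\<lambda>x. x (k, l', fst r, snd r)))"
      by (rule P.indep_var_compose) simp_all
    then have iv: "P.indep_var borel (\<lambda>x. x (k, l, fst r, snd r)) borel (\<lambda>x. x (k, l', fst r, snd r))"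
      by (simp add: comp_def)
    show ?thesis unfolding X_def
      using P.indep_var_lebesgue_integral[OF iv cs_integral_coord(1)[OF N] cs_integral_coord(1)[OF N]]
        cs_integral_coord(2)[OF N] by simp
  qed
  have bnd: "AE s in code_space N. X r s \<in> {- (1 / real N) .. 1 / real N}" for r
    using cs_AE_support[of N]
  proof (rule eventually_mono)
    fix s :: "nat \<times> nat \<times> nat \<times> nat \<Rightarrow> real" assume "\<forall>j. s j \<in> {- 1 / sqrt (real N), 1 / sqrt (real N)}"
    then have a: "s (k, l, fst r, snd r) \<in> {- 1 / sqrt (real N), 1 / sqrt (real N)}"
      and b: "s (k, l', fst r, snd r) \<in> {- 1 / sqrt (real N), 1 / sqrt (real N)}" by blast+
    have sq: "sqrt (real N) * sqrt (real N) = real N" using N by simp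
    show "X r s \<in> {- (1 / real N) .. 1 / real N}"
      using a b sq unfolding X_def by (auto simp: field_simps)
  qed
  interpret H: Hoeffding_ineq "code_space N" I X "\<lambda>_. - (1 / real N)" "\<lambda>_. 1 / real N" 0
  proof unfold_locales
    show "finite I" by (simp add: I_def)
    show "P.indep_vars (\<lambda>_. borel) X I" by (rule indX)
    show "\<And>i. i \<in> I \<Longrightarrow> AE x in code_space N. X i x \<in> {- (1 / real N)..1 / real N}" using bnd by blast
    show "0 \<equiv> \<Sum>i\<in>I. P.expectation (X i)" using expX by simp
  qed
  have pos: "0 < (\<Sum>i\<in>I. (1 / real N - - (1 / real N))\<^sup>2)"
    using N n by (intro sum_pos) (auto simp: I_def)
  have "P.prob {x \<in> space (code_space N). 0 + \<epsilon> \<le> (\<Sum>i\<in>I. X i x)} = P.prob {x \<in> space (code_space N). 0 + \<epsilon> \<le> (\<Sum>i\<in>I. X i x)}" ..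
  from H.Hoeffding_ineq_abs_ge[OF eps pos] show ?thesis
    by (simp add: I_def X_def)
qed



lemma Cs_meas [measurable]: "(\<lambda>s. Cs s N k l l' n) \<in> borel_measurable (code_space N)"
  unfolding Cs_def by measurable

lemma slln_eps:
  assumes N: "0 < N" and ll: "l \<noteq> l'" and eps: "0 < \<epsilon>"
  shows "AE s in code_space N. eventually (\<lambda>n. \<bar>Cs s N k l l' (Suc n)\<bar> < real (Suc n) * \<epsilon>) sequentially"
proof -
  interpret P: prob_space "code_space N" by (rule cs_prob)
  define A where "A = (\<lambda>n. {s \<in> space (code_space N). real (Suc n) * \<epsilon> \<le> \<bar>Cs s N k l l' (Suc n)\<bar>})"
  define q where "q = exp (- (\<epsilon>\<^sup>2 / 2))"
  have q: "0 < q" "q < 1" using eps by (auto simp: q_def)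
  have Ameas: "A n \<in> sets (code_space N)" for n unfolding A_def by measurable
  have bound: "measure (code_space N) (A n) \<le> 2 * q ^ Suc n" for n
  proof -
    have "measure (code_space N) (A n) \<le> 2 * exp (- 2 * (real (Suc n) * \<epsilon>)\<^sup>2 /
          (\<Sum>r\<in>{..<Suc n} \<times> {..<N}. (1 / real N - - (1 / real N))\<^sup>2))"
      unfolding A_def Cs_def by (rule hoeff_step[OF N ll]) (use eps in auto)
    also have "(\<Sum>r\<in>{..<Suc n} \<times> {..<N}. (1 / real N - - (1 / real N))\<^sup>2) = 4 * real (Suc n) / real N"
      using N by (simp add: power2_eq_square field_simps)
    also have "- 2 * (real (Suc n) * \<epsilon>)\<^sup>2 / (4 * real (Suc n) / real N) = - (real (Suc n) * real N * \<epsilon>\<^sup>2 / 2)"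
      using N by (simp add: power2_eq_square field_simps)
    also have "exp (- (real (Suc n) * real N * \<epsilon>\<^sup>2 / 2)) \<le> exp (- (real (Suc n) * \<epsilon>\<^sup>2 / 2))"
    proof -
      have "real (Suc n) * \<epsilon>\<^sup>2 \<le> real (Suc n) * real N * \<epsilon>\<^sup>2"
        using N by (intro mult_right_mono) auto
      then show ?thesis by simp
    qed
    also have "exp (- (real (Suc n) * \<epsilon>\<^sup>2 / 2)) = q ^ Suc n"
      unfolding q_def by (subst exp_of_nat_mult[symmetric]) simp
    finally show ?thesis by simp
  qed
  have summ: "summable (\<lambda>n. measure (code_space N) (A n))"
  proof (rule summable_comparison_test)
    show "\<exists>N0. \<forall>n\<ge>N0. norm (measure (code_space N) (A n)) \<le> 2 * q ^ n"
    proof (intro exI allI impI)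
      fix n
      have "q ^ Suc n \<le> q ^ n" using q by (simp add: mult_left_le_one_le)
      then show "norm (measure (code_space N) (A n)) \<le> 2 * q ^ n"
        using bound[of n] by simp
    qed
    show "summable (\<lambda>n. 2 * q ^ n)" using q by (intro summable_mult summable_geometric) simp
  qed
  have fin: "emeasure (code_space N) (A n) < \<infinity>" for n
  proof -
    have "emeasure (code_space N) (A n) \<le> 1" by (rule P.emeasure_le_1)
    also have "(1::ennreal) < \<infinity>" by simp
    finally show ?thesis .
  qed
  have "AE s in code_space N. eventually (\<lambda>n. s \<in> space (code_space N) - A n) sequentially"
    by (rule borel_cantelli_AE1[OF Ameas fin summ])
  then show ?thesis
    by (rule eventually_mono) (auto elim!: eventually_mono simp: A_def)
qed

lemma slln:
  assumes N: "0 < N" and ll: "l \<noteq> l'"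
  shows "AE s in code_space N. (\<lambda>M. Cs s N k l l' M / real M) \<longlonglongrightarrow> 0"
proof -
  have "AE s in code_space N. \<forall>m::nat. eventually (\<lambda>n. \<bar>Cs s N k l l' (Suc n)\<bar> < real (Suc n) * (1 / real (Suc m))) sequentially"
    by (subst AE_all_countable) (intro allI slln_eps[OF N ll]; simp)
  then show ?thesis
  proof (rule eventually_mono)
    fix s assume H: "\<forall>m::nat. eventually (\<lambda>n. \<bar>Cs s N k l l' (Suc n)\<bar> < real (Suc n) * (1 / real (Suc m))) sequentially"
    have "(\<lambda>n. Cs s N k l l' (Suc n) / real (Suc n)) \<longlonglongrightarrow> 0"
    proof (rule LIMSEQ_I)
      fix e :: real assume e: "0 < e"
      obtain m where m: "inverse (real (Suc m)) < e" using reals_Archimedean[OF e] by blast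
      from H[rule_format, of m] obtain n0 where n0: "\<And>n. n \<ge> n0 \<Longrightarrow> \<bar>Cs s N k l l' (Suc n)\<bar> < real (Suc n) * (1 / real (Suc m))"
        unfolding eventually_sequentially by blast
      show "\<exists>no. \<forall>n\<ge>no. norm (Cs s N k l l' (Suc n) / real (Suc n) - 0) < e"
      proof (intro exI allI impI)
        fix n assume "n \<ge> n0"
        from n0[OF this] have "\<bar>Cs s N k l l' (Suc n)\<bar> / real (Suc n) < 1 / real (Suc m)"
          by (simp add: field_simps)
        then show "norm (Cs s N k l l' (Suc n) / real (Suc n) - 0) < e"
          using m by (simp add: inverse_eq_divide)
      qed
    qed
    then show "(\<lambda>M. Cs s N k l l' M / real M) \<longlonglongrightarrow> 0"
      by (rule LIMSEQ_imp_Suc)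
  qed
qed



lemma Cs_diag:
  assumes N: "0 < N" and s: "\<forall>j. s j \<in> {- 1 / sqrt (real N), 1 / sqrt (real N)}"
  shows "Cs s N k l l M = real M"
proof -
  have sq: "s j * s j = 1 / real N" for j
  proof -
    have "s j \<in> {- 1 / sqrt (real N), 1 / sqrt (real N)}" using s by blast
    then have "s j * s j = (1 / sqrt (real N))\<^sup>2" by (auto simp: power2_eq_square)
    also have "\<dots> = 1 / real N" by (simp add: power_divide)
    finally show ?thesis .
  qed
  show ?thesis unfolding Cs_def using N by (simp add: sq)
qed

lemma limit_part:
  assumes N: "0 < N" and s: "\<forall>j. s j \<in> {- 1 / sqrt (real N), 1 / sqrt (real N)}"
    and sl: "\<forall>p::nat \<times> nat \<times> nat. fst (snd p) \<noteq> snd (snd p) \<longrightarrow>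
       (\<lambda>M. Cs s N (fst p) (fst (snd p)) (snd (snd p)) M / real M) \<longlonglongrightarrow> 0"
    and l: "l < L"
  shows "(\<lambda>M. \<Sum>l'<L. complex_of_real (2 * Pe * Cs s N k l l' M / real M) * a k l') \<longlonglongrightarrow> of_real (2 * Pe) * a k l"
proof -
  have each: "(\<lambda>M. Cs s N k l l' M / real M) \<longlonglongrightarrow> (if l' = l then 1 else 0)" for l'
  proof (cases "l' = l")
    case True
    have "(\<lambda>n. Cs s N k l l (Suc n) / real (Suc n)) \<longlonglongrightarrow> 1"
      using Cs_diag[OF N s] by simp
    then show ?thesis using True by (simp add: LIMSEQ_imp_Suc)
  next
    case False
    then show ?thesis using sl[rule_format, of "(k, l, l')"] by simp
  qed
  have "(\<lambda>M. \<Sum>l'<L. complex_of_real (2 * Pe * (Cs s N k l l' M / real M)) * a k l') \<longlonglongrightarrow>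
        (\<Sum>l'<L. complex_of_real (2 * Pe * (if l' = l then 1 else 0)) * a k l')"
    by (intro tendsto_intros each)
  also have "(\<Sum>l'<L. complex_of_real (2 * Pe * (if l' = l then 1 else 0)) * a k l') = of_real (2 * Pe) * a k l"
  proof -
    have "(\<Sum>l'<L. complex_of_real (2 * Pe * (if l' = l then 1 else 0)) * a k l') =
          (\<Sum>l'<L. if l' = l then of_real (2 * Pe) * a k l else 0)"
      by (intro sum.cong) auto
    also have "\<dots> = of_real (2 * Pe) * a k l" using l by (simp add: sum.delta)
    finally show ?thesis .
  qed
  finally show ?thesis by simp
qed

theorem mainTheorem2:
  fixes K N L :: nat and Pe :: real and a :: "nat \<Rightarrow> nat \<Rightarrow> complex"
  assumes "0 < K" and "0 < N" and "0 < L" and "0 \<le> Pe" and "Pe \<le> 1"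
  shows "AE s in code_space N. \<forall>k<K. \<forall>l<L.
           (\<lambda>M. measure_pmf.expectation (sym_space K M Pe) (\<lambda>bb. delta_af K N L M s bb a k l))
             \<longlonglongrightarrow> of_real (2 * Pe) * a k l"
proof -
  have sl: "AE s in code_space N. \<forall>p::nat \<times> nat \<times> nat. fst (snd p) \<noteq> snd (snd p) \<longrightarrow>
       (\<lambda>M. Cs s N (fst p) (fst (snd p)) (snd (snd p)) M / real M) \<longlonglongrightarrow> 0"
  proof (subst AE_all_countable, intro allI)
    fix p :: "nat \<times> nat \<times> nat"
    show "AE s in code_space N. fst (snd p) \<noteq> snd (snd p) \<longrightarrow>
       (\<lambda>M. Cs s N (fst p) (fst (snd p)) (snd (snd p)) M / real M) \<longlonglongrightarrow> 0"
    proof (cases "fst (snd p) = snd (snd p)")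
      case True then show ?thesis by simp
    next
      case False
      show ?thesis using slln[OF assms(2) False, of "fst p"] by (rule eventually_mono) simp
    qed
  qed
  show ?thesis
    using sl cs_AE_support[of N]
  proof (eventually_elim)
    case (elim s)
    show ?case
    proof (intro allI impI)
      fix k l assume k: "k < K" and l: "l < L"
      have "(\<lambda>M. measure_pmf.expectation (sym_space K M Pe) (\<lambda>bb. delta_af K N L M s bb a k l)) =
            (\<lambda>M. \<Sum>l'<L. complex_of_real (2 * Pe * Cs s N k l l' M / real M) * a k l')"
        using exp_delta[OF assms(4,5) k] by simp
      then show "(\<lambda>M. measure_pmf.expectation (sym_space K M Pe) (\<lambda>bb. delta_af K N L M s bb a k l))
             \<longlonglongrightarrow> of_real (2 * Pe) * a k l"
        using limit_part[OF assms(2) elim(2) elim(1) l] by simp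
    qed
  qed
qed

end
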